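(* Let $\alpha>3$, $t_0>0$, $x_0\in\mathcal H$, and let $x:[t_0,+\infty)\to\mathcal H$ be a solution of the Cauchy problem $$\tfrac{\alpha}{t}\dot x(t)+\operatorname{proj}_{C(x(t))+\ddot x(t)}(0)=0\ (t>t_0),\qquad x(t_0)=x_0,\ \dot x(t_0)=0 .$$ Assume the Assumption on the weak Pareto set in the context holds. Then $$\int_{t_0}^{+\infty}s\|\dot x(s)\|^2\,ds<+\infty,$$ i.e. $t\mapsto t\|\dot x(t)\|^2$ belongs to $L^1([t_0,+\infty))$.
   Context: $\mathcal H$ is a real Hilbert space. $f_1,\dots,f_m:\mathcal H\to\mathbb R$ are convex and continuously differentiable, and $F=(f_1,\dots,f_m)$. $C(x)=\operatorname{co}\{\nabla f_i(x):i=1,\dots,m\}$. For a closed convex $K$, $\operatorname{proj}_K(y)=\arg\min_{w\in K}\|w-y\|^2$. A solution of the Cauchy problem is a function $x:[t_0,+\infty)\to\mathcal H$ such that: $x\in C^1([t_0,+\infty))$; $\dot x$ is absolutely continuous on $[t_0,T]$ for every $T\ge t_0$; there is a Bochner measurable $\ddot x$ with $\dot x(t)=\dot x(t_0)+\int_{t_0}^t\ddot x(s)\,ds$ for all $t$, and $\frac{d}{dt}\dot x=\ddot x$ a.e.; the equation holds for almost all $t\ge t_0$; and the initial conditions hold. A point $x^*$ is weakly Pareto optimal if there is no $x$ with $f_i(x)<f_i(x^* )$ for all $i$; $P_w$ denotes the set of such points. For $\hat F\in\mathbb R^m$, $\mathcal L(\hat F)=\{x:F(x)\le\hat F\}$ and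 $P_w(\hat F)=P_w\cap\mathcal L(\hat F)$. Assumption: for all $x_0\in\mathcal H$ and all $x\in\mathcal L(F(x_0))$ there exists $x^*\in P_w(F(x))$, and $$R:=\sup_{F^*\in F(P_w(F(x_0)))}\ \inf_{x\in F^{-1}(F^* )}\tfrac12\|x-x_0\|^2<+\infty .$$ *)

theory Defs
  imports "HOL-Analysis.Analysis"
begin

definition has_gradient :: "('a::real_inner \<Rightarrow> real) \<Rightarrow> 'a \<Rightarrow> 'a \<Rightarrow> bool" where
  "has_gradient f v x \<longleftrightarrow> (f has_derivative (\<lambda>h. inner v h)) (at x)"

definition grad :: "('a::real_inner \<Rightarrow> real) \<Rightarrow> 'a \<Rightarrow> 'a" where
  "grad f x = (THE v. has_gradient f v x)"

definition proj :: "'a::real_inner set \<Rightarrow> 'a \<Rightarrow> 'a" where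
  "proj K y = (THE w. w \<in> K \<and> (\<forall>v\<in>K. (norm (w - y))\<^sup>2 \<le> (norm (v - y))\<^sup>2))"

text \<open>C(x) = co {grad f_i(x) : i = 1..m}, indices shifted to 0..m-1.\<close>
definition Cset :: "nat \<Rightarrow> (nat \<Rightarrow> 'a::real_inner \<Rightarrow> real) \<Rightarrow> 'a \<Rightarrow> 'a set" where
  "Cset m f x = convex hull {grad (f i) x | i. i < m}"

definition absolutely_continuous_on :: "real set \<Rightarrow> (real \<Rightarrow> 'a::real_normed_vector) \<Rightarrow> bool" where
  "absolutely_continuous_on S g \<longleftrightarrow>
     (\<forall>e>0. \<exists>d>0. \<forall>n::nat. \<forall>a b. (\<forall>k<n. a k \<in> S \<and> b k \<in> S \<and> a k \<le> b k)
        \<and> (\<forall>k<n. \<forall>l<n. k \<noteq> l \<longrightarrow> b k \<le> a l \<or> b l \<le> a k)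
        \<and> (\<Sum>k<n. b k - a k) < d
        \<longrightarrow> (\<Sum>k<n. norm (g (b k) - g (a k))) < e)"

definition weak_pareto :: "nat \<Rightarrow> (nat \<Rightarrow> 'a \<Rightarrow> real) \<Rightarrow> 'a set" where
  "weak_pareto m f = {xs. \<not> (\<exists>x. \<forall>i<m. f i x < f i xs)}"

definition sublevel :: "nat \<Rightarrow> (nat \<Rightarrow> 'a \<Rightarrow> real) \<Rightarrow> (nat \<Rightarrow> real) \<Rightarrow> 'a set" where
  "sublevel m f Fh = {x. \<forall>i<m. f i x \<le> Fh i}"

definition weak_pareto_level :: "nat \<Rightarrow> (nat \<Rightarrow> 'a \<Rightarrow> real) \<Rightarrow> (nat \<Rightarrow> real) \<Rightarrow> 'a set" where
  "weak_pareto_level m f Fh = weak_pareto m f \<inter> sublevel m f Fh"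

text \<open>F(x) as a vector in R^m (entries with index \<ge> m set to 0).\<close>
definition Fvec :: "nat \<Rightarrow> (nat \<Rightarrow> 'a \<Rightarrow> real) \<Rightarrow> 'a \<Rightarrow> nat \<Rightarrow> real" where
  "Fvec m f x = (\<lambda>i. if i < m then f i x else 0)"

end

theory Submission
  imports Defs
begin

lemma lip_from_vderiv:
  fixes F :: "real \<Rightarrow> 'b::real_normed_vector"
  assumes "\<And>t. t\<in>{a..b} \<Longrightarrow> (F has_vector_derivative F' t) (at t within {a..b})"
    and "continuous_on {a..b} F'"
  shows "\<exists>L. L-lipschitz_on {a..b} F"
proof -
  obtain B where B: "\<forall>t\<in>{a..b}. norm (F' t) \<le> B"
    using compact_imp_bounded[OF compact_continuous_image[OF assms(2) compact_Icc]]
    by (auto simp: bounded_iff)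
  have "(max B 0)-lipschitz_on {a..b} F"
  proof (rule bounded_derivative_imp_lipschitz[where f'="\<lambda>t h. h *\<^sub>R F' t"])
    show "(F has_derivative (\<lambda>h. h *\<^sub>R F' t)) (at t within {a..b})" if "t \<in> {a..b}" for t
      using assms(1)[OF that] by (simp add: has_vector_derivative_def)
    show "onorm (\<lambda>h. h *\<^sub>R F' t) \<le> max B 0" if "t \<in> {a..b}" for t
    proof -
      have "norm (F' t) \<le> B" using B that by blast
      then show ?thesis using onorm_scaleR_left[of "\<lambda>x. x" "F' t"]
        by (simp add: onorm_id bounded_linear_ident)
    qed
  qed auto
  then show ?thesis by blast
qed

lemma dini_of_deriv:
  fixes F :: "real \<Rightarrow> real"
  assumes "(F has_real_derivative d) (at s)" "d \<le> 0" "e > 0"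
  shows "\<exists>\<delta>>0. \<forall>h. 0 < h \<and> h < \<delta> \<longrightarrow> F (s + h) \<le> F s + e * h"
proof -
  have "((\<lambda>t. F t - e * t) has_real_derivative (d - e)) (at s)"
    using assms(1) by (auto intro!: derivative_eq_intros)
  from DERIV_neg_dec_right[OF this] assms(2,3) obtain \<delta> where "\<delta> > 0"
    "\<forall>h>0. h < \<delta> \<longrightarrow> F s - e * s > F (s + h) - e * (s + h)" by auto
  then show ?thesis by (intro exI[of _ \<delta>]) (auto simp: algebra_simps)
qed

lemma lip_min:
  fixes F :: "'i \<Rightarrow> real \<Rightarrow> real"
  assumes "finite I" "I \<noteq> {}" "\<And>i. i \<in> I \<Longrightarrow> L-lipschitz_on S (F i)" "0 \<le> L"
  shows "L-lipschitz_on S (\<lambda>t. Min ((\<lambda>i. F i t) ` I))"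
proof (rule lipschitz_onI)
  fix s t assume st: "s \<in> S" "t \<in> S"
  have one: "Min ((\<lambda>i. F i u) ` I) \<le> Min ((\<lambda>i. F i v) ` I) + L * dist u v" if "u \<in> S" "v \<in> S" for u v
  proof -
    have "Min ((\<lambda>i. F i v) ` I) \<in> (\<lambda>i. F i v) ` I" using assms(1,2) by (intro Min_in) auto
    then obtain i where i: "i \<in> I" "F i v = Min ((\<lambda>i. F i v) ` I)" by (metis imageE)
    have "Min ((\<lambda>i. F i u) ` I) \<le> F i u" using i assms(1) by auto
    also have "\<dots> \<le> F i v + L * dist u v"
      using lipschitz_onD[OF assms(3)[OF i(1)] that] by (auto simp: dist_real_def abs_le_iff)
    finally show ?thesis using i by simp
  qed
  show "dist (Min ((\<lambda>i. F i s) ` I)) (Min ((\<lambda>i. F i t) ` I)) \<le> L * dist s t"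
    using one[OF st] one[OF st(2,1)] by (simp add: dist_real_def abs_le_iff abs_minus_commute)
qed fact

lemma lip_inner:
  fixes u v :: "real \<Rightarrow> 'a::real_inner"
  assumes "L1-lipschitz_on S u" "L2-lipschitz_on S v" "\<forall>t\<in>S. norm (u t) \<le> B1" "\<forall>t\<in>S. norm (v t) \<le> B2"
    "0 \<le> B1" "0 \<le> B2"
  shows "(B1 * L2 + B2 * L1)-lipschitz_on S (\<lambda>t. inner (u t) (v t))"
proof (rule lipschitz_onI)
  fix s t assume st: "s \<in> S" "t \<in> S"
  have L12: "0 \<le> L1" "0 \<le> L2" using assms(1,2) lipschitz_on_nonneg by blast+
  have "inner (u s) (v s) - inner (u t) (v t) = inner (u s) (v s - v t) + inner (u s - u t) (v t)"
    by (simp add: inner_diff_left inner_diff_right)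
  moreover have "\<bar>inner (u s) (v s - v t)\<bar> \<le> norm (u s) * norm (v s - v t)" by (rule Cauchy_Schwarz_ineq2)
  moreover have "\<bar>inner (u s - u t) (v t)\<bar> \<le> norm (u s - u t) * norm (v t)" by (rule Cauchy_Schwarz_ineq2)
  ultimately have "\<bar>inner (u s) (v s) - inner (u t) (v t)\<bar> \<le> norm (u s) * norm (v s - v t) + norm (u s - u t) * norm (v t)"
    by (smt (verit) abs_triangle_ineq)
  also have "\<dots> \<le> B1 * (L2 * dist s t) + (L1 * dist s t) * B2"
    using lipschitz_onD[OF assms(1) st] lipschitz_onD[OF assms(2) st] assms(3-6) st L12
    by (intro add_mono mult_mono) (auto simp: dist_norm)
  finally show "dist (inner (u s) (v s)) (inner (u t) (v t)) \<le> (B1 * L2 + B2 * L1) * dist s t"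
    by (simp add: dist_real_def algebra_simps)
next
  show "0 \<le> B1 * L2 + B2 * L1" using assms lipschitz_on_nonneg by (metis add_nonneg_nonneg mult_nonneg_nonneg)
qed

lemma lip_scaleR:
  fixes v :: "real \<Rightarrow> 'a::real_normed_vector"
  assumes "L1-lipschitz_on S u" "L2-lipschitz_on S v" "\<forall>t\<in>S. \<bar>u t\<bar> \<le> B1" "\<forall>t\<in>S. norm (v t) \<le> B2"
    "0 \<le> B1" "0 \<le> B2"
  shows "(B1 * L2 + B2 * L1)-lipschitz_on S (\<lambda>t. u t *\<^sub>R v t)"
proof (rule lipschitz_onI)
  fix s t assume st: "s \<in> S" "t \<in> S"
  have L12: "0 \<le> L1" "0 \<le> L2" using assms(1,2) lipschitz_on_nonneg by blast+
  have "u s *\<^sub>R v s - u t *\<^sub>R v t = u s *\<^sub>R (v s - v t) + (u s - u t) *\<^sub>R v t"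
    by (simp add: algebra_simps)
  then have "norm (u s *\<^sub>R v s - u t *\<^sub>R v t) \<le> norm (u s *\<^sub>R (v s - v t)) + norm ((u s - u t) *\<^sub>R v t)"
    by (metis norm_triangle_ineq)
  then have "norm (u s *\<^sub>R v s - u t *\<^sub>R v t) \<le> \<bar>u s\<bar> * norm (v s - v t) + \<bar>u s - u t\<bar> * norm (v t)"
    by simp
  also have "\<dots> \<le> B1 * (L2 * dist s t) + (L1 * dist s t) * B2"
    using lipschitz_onD[OF assms(1) st] lipschitz_onD[OF assms(2) st] assms(3-6) st L12
    by (intro add_mono mult_mono) (auto simp: dist_norm dist_real_def)
  finally show "dist (u s *\<^sub>R v s) (u t *\<^sub>R v t) \<le> (B1 * L2 + B2 * L1) * dist s t"
    by (simp add: dist_norm algebra_simps)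
next
  show "0 \<le> B1 * L2 + B2 * L1" using assms lipschitz_on_nonneg by (metis add_nonneg_nonneg mult_nonneg_nonneg)
qed

lemma mono_dini:
  fixes F :: "real \<Rightarrow> real"
  assumes ab: "a \<le> b" and lip: "L-lipschitz_on {a..b} F" and N: "negligible N"
    and dini: "\<And>s e. s \<in> {a<..<b} \<Longrightarrow> s \<notin> N \<Longrightarrow> e > 0 \<Longrightarrow>
                 \<exists>\<delta>>0. \<forall>h. 0 < h \<and> h < \<delta> \<longrightarrow> F (s + h) \<le> F s + e * h"
  shows "F b \<le> F a"
proof (rule ccontr)
  assume "\<not> F b \<le> F a"
  hence lt: "F a < F b" by simp
  have ab': "a < b" using ab lt by (cases "a = b") auto
  define e where "e = (F b - F a) / (2 * (b - a))"
  have e: "e > 0" using lt ab' by (simp add: e_def)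
  define G where "G t = F t - e * (t - a)" for t
  have Ga: "G a = F a" by (simp add: G_def)
  have Gb: "G b = (F a + F b) / 2" using ab' by (simp add: G_def e_def field_simps)
  have L0: "0 \<le> L" using lip lipschitz_on_nonneg by blast
  have lipG: "(L + e)-lipschitz_on {a..b} G"
  proof (rule lipschitz_onI)
    fix s t assume st: "s \<in> {a..b}" "t \<in> {a..b}"
    have eqG: "G s - G t = (F s - F t) - e * (s - t)" by (simp add: G_def algebra_simps)
    have "\<bar>(F s - F t) - e * (s - t)\<bar> \<le> \<bar>F s - F t\<bar> + \<bar>e * (s - t)\<bar>" by (rule abs_triangle_ineq4)
    moreover have "\<bar>e * (s - t)\<bar> = e * \<bar>s - t\<bar>" using e by (simp add: abs_mult)
    ultimately have "\<bar>G s - G t\<bar> \<le> \<bar>F s - F t\<bar> + e * \<bar>s - t\<bar>" by (simp only: eqG)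
    also have "\<dots> \<le> L * \<bar>s - t\<bar> + e * \<bar>s - t\<bar>"
      using lipschitz_onD[OF lip st] by (simp add: dist_real_def)
    finally show "dist (G s) (G t) \<le> (L + e) * dist s t" by (simp add: dist_real_def algebra_simps)
  qed (use L0 e in auto)
  have contG: "continuous_on {a..b} G" using lipschitz_on_continuous_on[OF lipG] .
  have sub: "{G a<..<G b} \<subseteq> G ` (N \<inter> {a<..<b})"
  proof
    fix y assume y: "y \<in> {G a<..<G b}"
    define S where "S = {t\<in>{a..b}. G t \<le> y}"
    have S_eq: "S = {a..b} \<inter> G -` {..y}" by (auto simp: S_def)
    have clS: "closed S" unfolding S_eq
      by (rule continuous_closed_preimage[OF contG closed_atLeastAtMost closed_atMost])
    have aS: "a \<in> S" using y ab by (auto simp: S_def)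
    have bdd: "bdd_above S" by (auto simp: S_def bdd_above_def)
    define s where "s = Sup S"
    have sS: "s \<in> S" unfolding s_def using closed_contains_Sup[OF _ bdd clS] aS by blast
    have above: "G t > y" if "t \<in> {a..b}" "s < t" for t
    proof (rule ccontr)
      assume "\<not> G t > y"
      then have "t \<in> S" using that by (auto simp: S_def)
      then have "t \<le> s" unfolding s_def using bdd by (rule cSup_upper)
      then show False using that by simp
    qed
    have sab: "a \<le> s" "s \<le> b" using sS by (auto simp: S_def)
    have Gs: "G s = y"
    proof (rule ccontr)
      assume "G s \<noteq> y"
      then have "G s < y" using sS by (auto simp: S_def)
      moreover have "continuous_on {s..b} G" by (rule continuous_on_subset[OF contG]) (use sab in auto)
      ultimately obtain t where t: "t \<ge> s" "t \<le> b" "G t = y"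
        using IVT'[of G s y b] y sab by auto
      then have "t \<noteq> s" using \<open>G s < y\<close> by auto
      then show False using above[of t] t sab by auto
    qed
    have sa: "s \<noteq> a" using Gs y Ga by auto
    have sb: "s \<noteq> b" using Gs y by auto
    have sN: "s \<in> N"
    proof (rule ccontr)
      assume "s \<notin> N"
      have "e / 2 > 0" using e by simp
      from dini[OF _ \<open>s \<notin> N\<close> this] sab sa sb obtain \<delta> where \<delta>: "\<delta> > 0"
        "\<forall>h. 0 < h \<and> h < \<delta> \<longrightarrow> F (s + h) \<le> F s + e / 2 * h" by auto
      define h where "h = min \<delta> (b - s) / 2"
      have "s < b" using sab sb by simp
      then have h: "0 < h" "h < \<delta>" "s + h \<le> b" using \<delta>(1) unfolding h_def by (auto simp: min_def field_simps)
      have "F (s + h) \<le> F s + e / 2 * h" using \<delta> h by auto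
      then have "G (s + h) \<le> G s - e / 2 * h" by (simp add: G_def algebra_simps)
      also have "\<dots> < y" using Gs e h by simp
      finally show False using above[of "s + h"] h sab by auto
    qed
    show "y \<in> G ` (N \<inter> {a<..<b})" using Gs sN sab sa sb by force
  qed
  have "negligible (G ` (N \<inter> {a<..<b}))"
  proof (rule negligible_locally_Lipschitz_image)
    show "negligible (N \<inter> {a<..<b})" using N negligible_subset by blast
    fix x assume x: "x \<in> N \<inter> {a<..<b}"
    show "\<exists>T B. open T \<and> x \<in> T \<and> (\<forall>y\<in>(N \<inter> {a<..<b}) \<inter> T. norm (G y - G x) \<le> B * norm (y - x))"
      using x lipschitz_onD[OF lipG] by (intro exI[of _ UNIV] exI[of _ "L + e"]) (auto simp: dist_norm)
  qed auto
  then have "negligible {G a<..<G b}" using sub negligible_subset by blast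
  moreover have "\<not> negligible {G a<..<G b}" using Ga Gb lt by (intro open_not_negligible) auto
  ultimately show False by blast
qed

lemma proj_props:
  fixes K :: "'a::real_inner set"
  assumes "compact K" "convex K" "K \<noteq> {}"
  shows "proj K y \<in> K" "\<And>v. v \<in> K \<Longrightarrow> inner (y - proj K y) (v - proj K y) \<le> 0"
proof -
  have cont: "continuous_on K (\<lambda>w. dist y w)" by (intro continuous_intros)
  obtain w where w: "w \<in> K" "\<And>v. v \<in> K \<Longrightarrow> dist y w \<le> dist y v"
    using continuous_attains_inf[OF assms(1,3) cont] by blast
  have cl: "closed K" using assms(1) compact_imp_closed by blast
  have "proj K y = w"
    unfolding proj_def
  proof (rule the_equality)
    show "w \<in> K \<and> (\<forall>v\<in>K. (norm (w - y))\<^sup>2 \<le> (norm (v - y))\<^sup>2)"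
      using w by (auto simp: dist_norm norm_minus_commute intro!: power_mono)
    fix w' assume w': "w' \<in> K \<and> (\<forall>v\<in>K. (norm (w' - y))\<^sup>2 \<le> (norm (v - y))\<^sup>2)"
    have "\<forall>z\<in>K. dist y w' \<le> dist y z"
    proof
      fix z assume "z \<in> K"
      then have "(norm (w' - y))\<^sup>2 \<le> (norm (z - y))\<^sup>2" using w' by auto
      then have "norm (w' - y) \<le> norm (z - y)" using power2_le_imp_le norm_ge_zero by blast
      then show "dist y w' \<le> dist y z" by (simp add: dist_norm norm_minus_commute)
    qed
    then show "w' = w"
      using any_closest_point_unique[OF assms(2) cl, of w' w y] w w' by auto
  qed
  then show "proj K y \<in> K" using w by simp
  fix v assume "v \<in> K"
  then show "inner (y - proj K y) (v - proj K y) \<le> 0"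
    using any_closest_point_dot[OF assms(2) cl w(1) \<open>v \<in> K\<close>] w \<open>proj K y = w\<close> by auto
qed

lemma has_gradient_grad:
  assumes "has_gradient f v x"
  shows "grad f x = v"
  unfolding grad_def
proof (rule the_equality)
  show "has_gradient f v x" by fact
  fix w assume "has_gradient f w x"
  then have "(\<lambda>h. inner w h) = (\<lambda>h. inner v h)"
    using assms unfolding has_gradient_def by (rule has_derivative_unique)
  then have "inner w (w - v) = inner v (w - v)" by metis
  then have "inner (w - v) (w - v) = 0" by (simp add: inner_diff_left)
  then show "w = v" by simp
qed

lemma grad_ineq:
  fixes f :: "'a::real_inner \<Rightarrow> real"
  assumes cvx: "convex_on UNIV f" and g: "has_gradient f v x"
  shows "inner v (z - x) \<le> f z - f x"
proof -
  define \<phi> where "\<phi> s = f (x + s *\<^sub>R (z - x))" for s :: real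
  have "convex_on UNIV \<phi>"
  proof (rule convex_onI)
    fix u s t :: real assume u: "0 < u" "u < 1"
    have eq: "x + ((1 - u) *\<^sub>R s + u *\<^sub>R t) *\<^sub>R (z - x) = (1 - u) *\<^sub>R (x + s *\<^sub>R (z - x)) + u *\<^sub>R (x + t *\<^sub>R (z - x))"
      by (simp add: algebra_simps)
    show "\<phi> ((1 - u) *\<^sub>R s + u *\<^sub>R t) \<le> (1 - u) * \<phi> s + u * \<phi> t"
      unfolding \<phi>_def eq
      using convex_onD[OF cvx, of u "x + s *\<^sub>R (z - x)" "x + t *\<^sub>R (z - x)"] u by auto
  qed auto
  moreover have "(\<phi> has_field_derivative inner v (z - x)) (at 0 within UNIV)"
  proof -
    have d1: "((\<lambda>s. x + s *\<^sub>R (z - x)) has_derivative (\<lambda>s. s *\<^sub>R (z - x))) (at 0)"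
      by (auto intro!: derivative_eq_intros)
    have d2: "(f has_derivative (\<lambda>h. inner v h)) (at (x + 0 *\<^sub>R (z - x)))"
      using g by (simp add: has_gradient_def)
    from diff_chain_at[OF d1 d2]
    have "(\<phi> has_derivative (\<lambda>s. inner v (s *\<^sub>R (z - x)))) (at 0)"
      unfolding \<phi>_def by (simp add: o_def)
    moreover have "(\<lambda>s. inner v (s *\<^sub>R (z - x))) = (*) (inner v (z - x))" by (auto simp: fun_eq_iff)
    ultimately show ?thesis by (simp add: has_field_derivative_def)
  qed
  ultimately have "\<phi> 1 - \<phi> 0 \<ge> inner v (z - x) * (1 - 0)"
    by (intro convex_on_imp_above_tangent[where A=UNIV]) auto
  then show ?thesis by (simp add: \<phi>_def)
qed

lemma lip_from_integral:
  fixes v h :: "real \<Rightarrow> 'a::real_inner"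
  assumes hi: "\<And>t. t \<in> {a..b} \<Longrightarrow> (h has_integral (v t - v a)) {a..t}"
    and hb: "\<And>t. t \<in> {a..b} \<Longrightarrow> norm (h t) \<le> B" and B: "0 \<le> B"
  shows "B-lipschitz_on {a..b} v"
proof -
  have one: "norm (v t - v s) \<le> B * (t - s)" if st: "a \<le> s" "s \<le> t" "t \<le> b" for s t
  proof -
    define d where "d = v t - v s"
    define r where "r u = inner d (h u)" for u
    have ri: "(r has_integral inner d (v u - v a)) {a..u}" if "u \<in> {a..b}" for u
      unfolding r_def using has_integral_linear[OF hi[OF that] bounded_linear_inner_right[of d]]
      by (simp add: o_def)
    have int_t: "r integrable_on {a..t}" using ri[of t] st by (auto intro: has_integral_integrable)
    have "integral {a..s} r + integral {s..t} r = integral {a..t} r"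
      using Henstock_Kurzweil_Integration.integral_combine[OF st(1,2) int_t] .
    moreover have "integral {a..s} r = inner d (v s - v a)" using ri[of s] st by (simp add: integral_unique)
    moreover have "integral {a..t} r = inner d (v t - v a)" using ri[of t] st by (simp add: integral_unique)
    ultimately have eq: "integral {s..t} r = inner d d"
      by (simp add: d_def inner_diff_right algebra_simps)
    have "r integrable_on {s..t}" using integrable_subinterval_real[OF int_t] st by auto
    then have "(r has_integral inner d d) {s..t}" using eq by (metis has_integral_integrable_integral)
    moreover have "norm (r u) \<le> norm d * B" if "u \<in> {s..t} - {}" for u
    proof -
      have "norm (r u) \<le> norm d * norm (h u)" unfolding r_def using Cauchy_Schwarz_ineq2 by simp
      also have "\<dots> \<le> norm d * B" using hb[of u] that st by (intro mult_left_mono) auto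
      finally show ?thesis .
    qed
    ultimately have "norm (inner d d) \<le> norm d * B * (t - s)"
      using B has_integral_bound_real[where S="{}" and f=r and i="inner d d" and a=s and b=t and B="norm d * B"] st
      by auto
    then have "norm d * norm d \<le> norm d * (B * (t - s))"
      using st by (simp add: power2_norm_eq_inner[symmetric] power2_eq_square algebra_simps)
    then have "norm d \<le> B * (t - s)"
      by (cases "norm d = 0") (use st B in auto)
    then show ?thesis by (simp add: d_def)
  qed
  show ?thesis
  proof (rule lipschitz_onI)
    fix s t assume "s \<in> {a..b}" "t \<in> {a..b}"
    then show "dist (v s) (v t) \<le> B * dist s t"
      using one[of s t] one[of t s]
      by (cases "s \<le> t") (auto simp: dist_norm norm_minus_commute dist_real_def)
  qed fact
qed

lemma chain_grad:
  assumes "(x has_vector_derivative v) (at t within S)" "(f has_derivative (\<lambda>h. inner G h)) (at (x t))"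
  shows "((\<lambda>s. f (x s)) has_vector_derivative inner G v) (at t within S)"
proof -
  have "(f has_derivative (\<lambda>h. inner G h)) (at (x t) within x ` S)"
    using assms(2) has_derivative_at_withinI by blast
  from diff_chain_within[OF assms(1)[unfolded has_vector_derivative_def] this]
  show ?thesis by (simp add: has_vector_derivative_def o_def)
qed

lemma Cset_lower:
  assumes "c \<in> Cset m f y" "\<And>i. i < m \<Longrightarrow> M \<le> inner (grad (f i) y) w"
  shows "M \<le> inner c w"
proof -
  have "Cset m f y \<subseteq> {c. inner w c \<ge> M}"
    unfolding Cset_def
  proof (rule hull_minimal)
    show "{grad (f i) y |i. i < m} \<subseteq> {c. inner w c \<ge> M}" using assms(2) by (auto simp: inner_commute)
    show "convex {c. inner w c \<ge> M}" by (rule convex_halfspace_ge)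
  qed
  then show ?thesis using assms(1) by (auto simp: inner_commute)
qed

lemma Cset_norm:
  assumes "c \<in> Cset m f y" "\<And>i. i < m \<Longrightarrow> norm (grad (f i) y) \<le> B"
  shows "norm c \<le> B"
proof -
  have "Cset m f y \<subseteq> cball 0 B"
    unfolding Cset_def by (rule hull_minimal) (use assms(2) in \<open>auto simp: convex_cball\<close>)
  then show ?thesis using assms(1) by auto
qed

lemma Cset_props:
  assumes "0 < m"
  shows "compact (Cset m f y)" "convex (Cset m f y)" "Cset m f y \<noteq> {}"
    and "\<And>i. i < m \<Longrightarrow> grad (f i) y \<in> Cset m f y"
proof -
  have eq: "{grad (f i) y | i. i < m} = (\<lambda>i. grad (f i) y) ` {..<m}" by auto
  show "compact (Cset m f y)" unfolding Cset_def eq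
    by (rule finite_imp_compact_convex_hull) auto
  show "convex (Cset m f y)" unfolding Cset_def by simp
  show mem: "\<And>i. i < m \<Longrightarrow> grad (f i) y \<in> Cset m f y" unfolding Cset_def
    by (rule hull_inc) auto
  show "Cset m f y \<noteq> {}" using mem[OF assms] by auto
qed

lemma eqn_props:
  fixes C :: "'a::real_inner set"
  assumes C: "compact C" "convex C" "C \<noteq> {}" and eq: "r *\<^sub>R v + proj ((\<lambda>c. c + a) ` C) 0 = 0" and r: "r > 0"
  shows "- r *\<^sub>R v - a \<in> C" "\<And>c. c \<in> C \<Longrightarrow> inner v c \<le> inner v (- r *\<^sub>R v - a)"
proof -
  define K where "K = (\<lambda>c. c + a) ` C"
  have Kt: "K = (+) a ` C" unfolding K_def by (rule image_cong) (auto simp: add.commute)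
  have K: "compact K" "convex K" "K \<noteq> {}"
    using C unfolding Kt by (auto intro: compact_translation convex_translation)
  have p: "proj K 0 = - r *\<^sub>R v" using eq unfolding K_def by (simp add: eq_neg_iff_add_eq_0 add.commute)
  have "- r *\<^sub>R v \<in> K" using proj_props(1)[OF K, of 0] p by simp
  then obtain c0 where "c0 \<in> C" "- r *\<^sub>R v = c0 + a" unfolding K_def by auto
  then show gC: "- r *\<^sub>R v - a \<in> C" by (simp add: algebra_simps)
  fix c assume "c \<in> C"
  then have "c + a \<in> K" unfolding K_def by auto
  from proj_props(2)[OF K this, of 0] p
  have "inner (r *\<^sub>R v) (c + a + r *\<^sub>R v) \<le> 0" by simp
  moreover have "c + a + r *\<^sub>R v = c - (- r *\<^sub>R v - a)" by (simp add: algebra_simps)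
  ultimately have "r * inner v (c - (- r *\<^sub>R v - a)) \<le> 0" by simp
  then have "inner v (c - (- r *\<^sub>R v - a)) \<le> 0" using r by (simp add: mult_le_0_iff)
  then show "inner v c \<le> inner v (- r *\<^sub>R v - a)" by (simp add: inner_diff_right)
qed

lemma vd_inner:
  fixes u v :: "real \<Rightarrow> 'a::real_inner"
  assumes "(u has_vector_derivative u') (at t within S)" "(v has_vector_derivative v') (at t within S)"
  shows "((\<lambda>t. inner (u t) (v t)) has_real_derivative (inner (u t) v' + inner u' (v t))) (at t within S)"
  using assms unfolding has_real_derivative_iff_has_vector_derivative has_vector_derivative_def
  apply -
  apply (rule has_derivative_eq_rhs)
   apply (rule has_derivative_inner; assumption)
  apply (auto simp: fun_eq_iff inner_commute algebra_simps)
  done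

lemma aux_lin:
  fixes d a b a' b' :: real
  assumes "d \<le> 2 * a + 2 * b" "a \<le> a'" "b \<le> b'"
  shows "d \<le> 2 * a' + 2 * b'"
  using assms by linarith

lemma bound_cont:
  fixes F :: "real \<Rightarrow> 'b::real_normed_vector"
  assumes "continuous_on {a..b} F"
  shows "\<exists>B. \<forall>t\<in>{a..b}. norm (F t) \<le> B"
  using compact_imp_bounded[OF compact_continuous_image[OF assms compact_Icc]]
  by (auto simp: bounded_iff)

theorem corollary4p15:
  fixes f :: "nat \<Rightarrow> 'a::{real_inner, complete_space} \<Rightarrow> real"
    and m :: nat and \<alpha> t0 :: real and x0 :: 'a
    and x x' x'' :: "real \<Rightarrow> 'a"
  assumes m_pos: "0 < m"
    and convex: "\<forall>i<m. convex_on UNIV (f i)"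
    and diff: "\<forall>i<m. \<forall>y. \<exists>v. has_gradient (f i) v y"
    and grad_cont: "\<forall>i<m. continuous_on UNIV (grad (f i))"
    and alpha: "\<alpha> > 3"
    and t0: "t0 > 0"
    \<comment> \<open>x is C^1 on [t0,+inf) with derivative x'\<close>
    and x_deriv: "\<forall>t\<ge>t0. (x has_vector_derivative x' t) (at t within {t0..})"
    and x'_cont: "continuous_on {t0..} x'"
    \<comment> \<open>x' is absolutely continuous on every [t0,T]\<close>
    and x'_ac: "\<forall>T\<ge>t0. absolutely_continuous_on {t0..T} x'"
    \<comment> \<open>x'' measurable, x' is the integral of x'', and x'' is the a.e. derivative of x'\<close>
    and x''_meas: "x'' \<in> borel_measurable (lebesgue_on {t0..})"
    and x''_int: "\<forall>t\<ge>t0. (x'' has_integral (x' t - x' t0)) {t0..t}"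
    and x''_deriv: "AE t in lebesgue. t > t0 \<longrightarrow> (x' has_vector_derivative x'' t) (at t)"
    \<comment> \<open>the equation, for almost all t > t0\<close>
    and eqn: "AE t in lebesgue. t > t0 \<longrightarrow>
                (\<alpha> / t) *\<^sub>R x' t + proj ((\<lambda>v. v + x'' t) ` Cset m f (x t)) 0 = 0"
    and init: "x t0 = x0" "x' t0 = 0"
    \<comment> \<open>Assumption on the weak Pareto set\<close>
    and pareto_exists: "\<forall>y0 y. y \<in> sublevel m f (Fvec m f y0) \<longrightarrow>
                          (\<exists>xs. xs \<in> weak_pareto_level m f (Fvec m f y))"
    and R_finite: "(SUP Fs \<in> Fvec m f ` weak_pareto_level m f (Fvec m f x0).
                      INF z \<in> {z. Fvec m f z = Fs}. ereal ((norm (z - x0))\<^sup>2 / 2)) < \<infinity>"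
  shows "(\<integral>\<^sup>+ s \<in> {t0..}. ennreal (s * (norm (x' s))\<^sup>2) \<partial>lborel) < \<infinity>"
proof -
  have hg': "has_gradient (f i) (grad (f i) y) y" if "i < m" for i y
    using diff that has_gradient_grad by metis
  have hg: "(f i has_derivative (\<lambda>h. inner (grad (f i) y) h)) (at y)" if "i < m" for i y
    using hg'[OF that] unfolding has_gradient_def .
  have cvx: "convex_on UNIV (f i)" if "i < m" for i using convex that by auto
  have gi: "inner (grad (f i) y) (z - y) \<le> f i z - f i y" if "i < m" for i y z
    using grad_ineq[OF cvx[OF that] hg'[OF that]] .
  have xd_within: "(x has_vector_derivative x' t) (at t within {t0..})" if "t \<ge> t0" for t
    using x_deriv that by auto
  have xd_at: "(x has_vector_derivative x' t) (at t)" if "t > t0" for t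
  proof -
    have "t \<in> interior {t0..}" using that by simp
    then show ?thesis using xd_within[of t] that at_within_interior[of t "{t0..}"] by simp
  qed
  have x_cont: "continuous_on {t0..} x"
    by (rule continuous_on_vector_derivative) (use xd_within in auto)
  have gx_cont: "continuous_on S (\<lambda>t. grad (f i) (x t))" if "i < m" "S \<subseteq> {t0..}" for i S
    using continuous_on_compose2[OF grad_cont[rule_format, OF that(1)] continuous_on_subset[OF x_cont that(2)]]
    by auto
  have fx_at: "((\<lambda>t. f i (x t)) has_real_derivative inner (grad (f i) (x t)) (x' t)) (at t)"
    if "i < m" "t > t0" for i t
    using chain_grad[OF xd_at[OF that(2)] hg[OF that(1)]]
    by (simp add: has_real_derivative_iff_has_vector_derivative)
  have fx_within: "((\<lambda>t. f i (x t)) has_real_derivative inner (grad (f i) (x t)) (x' t)) (at t within S)"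
    if "i < m" "t \<ge> t0" "S \<subseteq> {t0..}" for i t S
    using chain_grad[OF has_vector_derivative_within_subset[OF xd_within[OF that(2)] that(3)] hg[OF that(1)]]
    by (simp add: has_real_derivative_iff_has_vector_derivative)
  have apos: "\<alpha> > 0" using alpha by simp
  define P where "P t \<longleftrightarrow> t > t0 \<longrightarrow> (x' has_vector_derivative x'' t) (at t) \<and>
      (\<alpha> / t) *\<^sub>R x' t + proj ((\<lambda>v. v + x'' t) ` Cset m f (x t)) 0 = 0" for t
  have "AE t in lebesgue. P t" using x''_deriv eqn unfolding P_def by eventually_elim auto
  then obtain N where N1: "{t \<in> space lebesgue. \<not> P t} \<subseteq> N" and N2: "emeasure lebesgue N = 0"
    and N3: "N \<in> sets lebesgue"
    by (rule AE_E)
  have negN: "negligible N" unfolding negligible_iff_null_sets using N2 N3 by (simp add: null_sets_def)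
  have good: "P t" if "t \<notin> N" for t using N1 that by auto
  have x'd: "(x' has_vector_derivative x'' t) (at t)" if "t > t0" "t \<notin> N" for t
    using good[OF that(2)] that(1) unfolding P_def by auto
  define g where "g t = - (\<alpha> / t) *\<^sub>R x' t - x'' t" for t
  have x''eq: "x'' t = - (\<alpha> / t) *\<^sub>R x' t - g t" for t by (simp add: g_def)
  have gC: "g t \<in> Cset m f (x t)" and gmax: "\<And>c. c \<in> Cset m f (x t) \<Longrightarrow> inner (x' t) c \<le> inner (x' t) (g t)"
    if "t > t0" "t \<notin> N" for t
  proof -
    have e: "(\<alpha> / t) *\<^sub>R x' t + proj ((\<lambda>v. v + x'' t) ` Cset m f (x t)) 0 = 0"
      using good[OF that(2)] that(1) unfolding P_def by auto
    have r: "\<alpha> / t > 0" using that t0 apos by simp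
    note cp = Cset_props[OF m_pos, where f=f and y="x t"]
    show "g t \<in> Cset m f (x t)" using eqn_props(1)[OF cp(1-3) e r] by (simp add: g_def)
    show "inner (x' t) c \<le> inner (x' t) (g t)" if "c \<in> Cset m f (x t)" for c
      using eqn_props(2)[OF cp(1-3) e r that] by (simp add: g_def)
  qed
  define S where "S = (SUP Fs \<in> Fvec m f ` weak_pareto_level m f (Fvec m f x0).
                      INF z \<in> {z. Fvec m f z = Fs}. ereal ((norm (z - x0))\<^sup>2 / 2))"
  have S_fin: "S < \<infinity>" using R_finite unfolding S_def .
  have pick0: "\<exists>xs. xs \<in> weak_pareto_level m f (Fvec m f x0) \<and> (\<forall>i<m. f i xs \<le> f i y)"
    if "\<forall>i<m. f i y \<le> f i x0" for y
  proof -
    have "y \<in> sublevel m f (Fvec m f x0)" using that by (simp add: sublevel_def Fvec_def)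
    then obtain xs where xs: "xs \<in> weak_pareto_level m f (Fvec m f y)" using pareto_exists by blast
    then have "\<forall>i<m. f i xs \<le> f i y" by (simp add: weak_pareto_level_def sublevel_def Fvec_def)
    moreover then have "xs \<in> weak_pareto_level m f (Fvec m f x0)"
      using xs that by (force simp: weak_pareto_level_def sublevel_def Fvec_def)
    ultimately show ?thesis by blast
  qed
  have INF_le: "(INF z \<in> {z. Fvec m f z = Fvec m f xs}. ereal ((norm (z - x0))\<^sup>2 / 2)) \<le> S"
    if "xs \<in> weak_pareto_level m f (Fvec m f x0)" for xs
    unfolding S_def using that by (intro SUP_upper) auto
  have INF_ge: "0 \<le> (INF z \<in> {z. Fvec m f z = Fvec m f xs}. ereal ((norm (z - x0))\<^sup>2 / 2))" for xs
    by (intro INF_greatest) auto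
  have S0: "0 \<le> S"
  proof -
    obtain xs where "xs \<in> weak_pareto_level m f (Fvec m f x0)" using pick0[of x0] by auto
    then show ?thesis using INF_le INF_ge order_trans by blast
  qed
  define Rr where "Rr = real_of_ereal S"
  have SR: "S = ereal Rr" and Rr0: "0 \<le> Rr" using S0 S_fin unfolding Rr_def
    by (cases S; auto)+
  have pick: "\<exists>z. (\<forall>i<m. f i z \<le> f i y) \<and> (norm (z - x0))\<^sup>2 < 2 * (Rr + 1)"
    if hy: "\<forall>i<m. f i y \<le> f i x0" for y
  proof -
    obtain xs where xs: "xs \<in> weak_pareto_level m f (Fvec m f x0)" "\<forall>i<m. f i xs \<le> f i y"
      using pick0[OF hy] by auto
    have "(INF z \<in> {z. Fvec m f z = Fvec m f xs}. ereal ((norm (z - x0))\<^sup>2 / 2)) < ereal (Rr + 1)"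
      using INF_le[OF xs(1)] SR by (simp add: le_less_trans)
    then obtain z where z: "Fvec m f z = Fvec m f xs" "ereal ((norm (z - x0))\<^sup>2 / 2) < ereal (Rr + 1)"
      unfolding INF_less_iff by auto
    have "f i z = f i xs" if "i < m" for i using fun_cong[OF z(1), of i] that by (simp add: Fvec_def)
    then show ?thesis using z(2) xs(2) by (intro exI[of _ z]) auto
  qed
  define \<rho> where "\<rho> = sqrt (2 * (Rr + 1))"
  define Gn where "Gn = norm (grad (f 0) x0)"
  define K where "K = t0\<^sup>2 * Gn * \<rho> + (\<alpha> - 1) * \<rho>\<^sup>2"
  define h where "h s = s * (norm (x' s))\<^sup>2" for s
  have hcont: "continuous_on S' h" if "S' \<subseteq> {t0..}" for S'
    unfolding h_def by (intro continuous_intros continuous_on_subset[OF x'_cont that])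
  have main: "(\<alpha> - 3) * integral {t0..T} h \<le> K" if T: "T \<ge> t0" for T
  proof -
    have Tsub: "{t0..T} \<subseteq> {t0..}" by auto
    have t0T: "t0 \<in> {t0..T}" "T \<in> {t0..T}" using T by auto
    obtain Bv where Bv: "\<forall>t\<in>{t0..T}. norm (x' t) \<le> Bv"
      using bound_cont[OF continuous_on_subset[OF x'_cont Tsub]] by blast
    have Bv0: "0 \<le> Bv" using Bv t0T(1) norm_ge_zero order_trans by blast
    have sumc: "continuous_on {t0..T} (\<lambda>t. \<Sum>i<m. norm (grad (f i) (x t)))"
      by (intro continuous_on_sum continuous_on_norm gx_cont Tsub) auto
    obtain Bg where Bg': "\<forall>t\<in>{t0..T}. norm (\<Sum>i<m. norm (grad (f i) (x t))) \<le> Bg"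
      using bound_cont[OF sumc] by blast
    have Bg: "norm (grad (f i) (x t)) \<le> Bg" if "i < m" "t \<in> {t0..T}" for i t
    proof -
      have "norm (grad (f i) (x t)) \<le> (\<Sum>i<m. norm (grad (f i) (x t)))"
        by (rule member_le_sum) (use that in auto)
      also have "\<dots> \<le> Bg" using Bg'[rule_format, OF that(2)] by simp
      finally show ?thesis .
    qed
    have Bg0: "0 \<le> Bg" using Bg[OF m_pos t0T(1)] norm_ge_zero order_trans by blast
    define B2 where "B2 = \<alpha> / t0 * Bv + Bg"
    have B20: "0 \<le> B2" using Bv0 Bg0 apos t0 by (simp add: B2_def)
    have x''b: "norm (x'' t) \<le> B2" if "t \<in> {t0..T}" "t > t0" "t \<notin> N" for t
    proof -
      have ng: "norm (g t) \<le> Bg" using Cset_norm[OF gC[OF that(2,3)]] Bg that(1) by blast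
      have "norm (x'' t) \<le> norm ((\<alpha> / t) *\<^sub>R x' t) + norm (g t)"
        unfolding x''eq by (metis norm_minus_cancel norm_triangle_ineq4 scaleR_minus_left)
      also have "norm ((\<alpha> / t) *\<^sub>R x' t) = \<alpha> / t * norm (x' t)" using apos that t0 by simp
      also have "\<alpha> / t * norm (x' t) \<le> \<alpha> / t0 * Bv"
      proof (rule mult_mono)
        show "\<alpha> / t \<le> \<alpha> / t0" using apos that t0 by (intro divide_left_mono) auto
      qed (use Bv that apos t0 in auto)
      finally show ?thesis using ng by (simp add: B2_def)
    qed
    define x2 where "x2 s = (if s > t0 \<and> s \<notin> N then x'' s else 0)" for s
    have x2i: "(x2 has_integral (x' t - x' t0)) {t0..t}" if "t \<in> {t0..T}" for t
    proof -
      have "(x'' has_integral (x' t - x' t0)) {t0..t}" using x''_int that by auto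
      moreover have "negligible (N \<union> {t0})" using negN by auto
      ultimately show ?thesis by (rule has_integral_spike[rotated 2]) (auto simp: x2_def)
    qed
    have x2b: "norm (x2 t) \<le> B2" if "t \<in> {t0..T}" for t using x''b that B20 by (auto simp: x2_def)
    have lipv: "B2-lipschitz_on {t0..T} x'" by (rule lip_from_integral[OF x2i x2b B20])
    have xdT: "(x has_vector_derivative x' t) (at t within {t0..T})" if "t \<in> {t0..T}" for t
      using has_vector_derivative_within_subset[OF xd_within Tsub] that by auto
    obtain Lx where lipx: "Lx-lipschitz_on {t0..T} x"
      using lip_from_vderiv[OF xdT continuous_on_subset[OF x'_cont Tsub]] by blast
    have energy: "f i (x T) \<le> f i x0" if i: "i < m" for i
    proof -
      define F where "F t = 2 * f i (x t) + inner (x' t) (x' t)" for t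
      have d1: "((\<lambda>t. 2 * f i (x t)) has_vector_derivative 2 * inner (grad (f i) (x t)) (x' t)) (at t within {t0..T})"
        if "t \<in> {t0..T}" for t
        unfolding has_real_derivative_iff_has_vector_derivative[symmetric]
        using DERIV_cmult[OF fx_within[OF i _ Tsub], of t 2] that by auto
      have c1: "continuous_on {t0..T} (\<lambda>t. 2 * inner (grad (f i) (x t)) (x' t))"
        by (intro continuous_intros gx_cont[OF i Tsub] continuous_on_subset[OF x'_cont Tsub])
      obtain L1 where L1: "L1-lipschitz_on {t0..T} (\<lambda>t. 2 * f i (x t))"
        using lip_from_vderiv[OF d1 c1] by blast
      have L2: "(Bv * B2 + Bv * B2)-lipschitz_on {t0..T} (\<lambda>t. inner (x' t) (x' t))"
        by (rule lip_inner[OF lipv lipv Bv Bv Bv0 Bv0])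
      have lipF: "(L1 + (Bv * B2 + Bv * B2))-lipschitz_on {t0..T} F"
        unfolding F_def by (rule lipschitz_on_add[OF L1 L2])
      have "F T \<le> F t0"
      proof (rule mono_dini[OF T lipF negN])
        fix s e assume s: "s \<in> {t0<..<T}" "s \<notin> N" "(e::real) > 0"
        have s0: "s > t0" using s by auto
        have d: "(F has_real_derivative (2 * inner (grad (f i) (x s)) (x' s) + (inner (x' s) (x'' s) + inner (x'' s) (x' s)))) (at s)"
          unfolding F_def using s0 s(2) by (auto intro!: derivative_eq_intros vd_inner fx_at[OF i] x'd)
        have "2 * inner (grad (f i) (x s)) (x' s) + (inner (x' s) (x'' s) + inner (x'' s) (x' s)) \<le> 0"
        proof -
          have "inner (x' s) (grad (f i) (x s)) \<le> inner (x' s) (g s)"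
            using gmax[OF s0 s(2) Cset_props(4)[OF m_pos i]] .
          moreover have "inner (x' s) (x'' s) = - (\<alpha> / s) * inner (x' s) (x' s) - inner (x' s) (g s)"
            by (simp add: x''eq inner_diff_right)
          moreover have "(\<alpha> / s) * inner (x' s) (x' s) \<ge> 0" using apos s0 t0 by simp
          ultimately show ?thesis by (simp add: inner_commute)
        qed
        then show "\<exists>\<delta>>0. \<forall>h. 0 < h \<and> h < \<delta> \<longrightarrow> F (s + h) \<le> F s + e * h"
          using dini_of_deriv[OF d _ s(3)] by blast
      qed
      then have "2 * f i (x T) + inner (x' T) (x' T) \<le> 2 * f i x0" using init by (simp add: F_def)
      moreover have "0 \<le> inner (x' T) (x' T)" by simp
      ultimately show ?thesis by linarith
    qed
    obtain z where z: "\<forall>i<m. f i z \<le> f i (x T)" "(norm (z - x0))\<^sup>2 < 2 * (Rr + 1)"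
      using pick[of "x T"] energy by blast
    define w where "w t = 2 *\<^sub>R (x t - z) + t *\<^sub>R x' t" for t
    define J where "J t = integral {t0..t} h" for t
    define P where "P i t = 2 * t\<^sup>2 * (f i (x t) - f i z) + 2 * (\<alpha> - 3) * inner (x t - z) (x t - z)
        + 2 * (\<alpha> - 3) * J t" for i t
    define E where "E i t = P i t + inner (w t) (w t)" for i t
    define D where "D t = Min ((\<lambda>i. E i t) ` {..<m})" for t
    have hc: "continuous_on {t0..T} h" using hcont Tsub .
    have Jd: "(J has_real_derivative h t) (at t within {t0..T})" if "t \<in> {t0..T}" for t
      unfolding J_def has_real_derivative_iff_has_vector_derivative
      using integral_has_vector_derivative[OF hc that] .
    have Jd_at: "(J has_real_derivative h t) (at t)" if "t \<in> {t0<..<T}" for t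
    proof -
      have "t \<in> interior {t0..T}" using that by simp
      then show ?thesis using Jd[of t] that at_within_interior[of t "{t0..T}"] by auto
    qed
    have wc: "continuous_on {t0..T} w" unfolding w_def
      by (intro continuous_intros continuous_on_subset[OF x_cont Tsub] continuous_on_subset[OF x'_cont Tsub])
    obtain Bw where Bw: "\<forall>t\<in>{t0..T}. norm (w t) \<le> Bw" using bound_cont[OF wc] by blast
    have Bw0: "0 \<le> Bw" using Bw t0T(1) norm_ge_zero order_trans by blast
    have Lx0: "0 \<le> Lx" using lipx lipschitz_on_nonneg by blast
    have l1: "(2 * Lx)-lipschitz_on {t0..T} (\<lambda>t. 2 *\<^sub>R (x t - z))"
    proof (rule lipschitz_onI)
      fix s t assume st: "s \<in> {t0..T}" "t \<in> {t0..T}"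
      have eq: "2 *\<^sub>R (x s - z) - 2 *\<^sub>R (x t - z) = 2 *\<^sub>R (x s - x t)" by (simp add: algebra_simps)
      show "dist (2 *\<^sub>R (x s - z)) (2 *\<^sub>R (x t - z)) \<le> 2 * Lx * dist s t"
        unfolding dist_norm eq using lipschitz_onD[OF lipx st] by (simp add: dist_norm)
    qed (use Lx0 in simp)
    have l2: "(T * B2 + Bv * 1)-lipschitz_on {t0..T} (\<lambda>t. t *\<^sub>R x' t)"
      by (rule lip_scaleR[OF lipschitz_on_id lipv _ Bv _ Bv0]) (use T t0 in auto)
    have lipw: "(2 * Lx + (T * B2 + Bv * 1))-lipschitz_on {t0..T} w"
      unfolding w_def by (rule lipschitz_on_add[OF l1 l2])
    define Lw where "Lw = 2 * Lx + (T * B2 + Bv * 1)"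
    have lipQ: "(Bw * Lw + Bw * Lw)-lipschitz_on {t0..T} (\<lambda>t. inner (w t) (w t))"
      using lip_inner[OF lipw lipw Bw Bw Bw0 Bw0] unfolding Lw_def .
    have PL: "\<exists>L. L-lipschitz_on {t0..T} (P i)" if i: "i < m" for i
    proof -
      have d: "(P i has_vector_derivative
          (2 * (2 * t) * (f i (x t) - f i z) + 2 * t\<^sup>2 * inner (grad (f i) (x t)) (x' t)
           + 2 * (\<alpha> - 3) * (inner (x t - z) (x' t) + inner (x' t) (x t - z)) + 2 * (\<alpha> - 3) * h t))
          (at t within {t0..T})" if "t \<in> {t0..T}" for t
        unfolding has_real_derivative_iff_has_vector_derivative[symmetric] P_def
        using that fx_within[OF i _ Tsub, of t] xdT[OF that] Jd[OF that]
        by (auto intro!: derivative_eq_intros vd_inner)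
      have c: "continuous_on {t0..T} (\<lambda>t. 2 * (2 * t) * (f i (x t) - f i z) + 2 * t\<^sup>2 * inner (grad (f i) (x t)) (x' t)
           + 2 * (\<alpha> - 3) * (inner (x t - z) (x' t) + inner (x' t) (x t - z)) + 2 * (\<alpha> - 3) * h t)"
      proof -
        have fc: "continuous_on {t0..T} (\<lambda>t. f i (x t))"
          using fx_within[OF i _ Tsub] by (intro DERIV_continuous_on) (auto)
        show ?thesis
          by (intro continuous_intros fc hc gx_cont[OF i Tsub] continuous_on_subset[OF x'_cont Tsub]
              continuous_on_subset[OF x_cont Tsub])
      qed
      show ?thesis using lip_from_vderiv[OF d c] .
    qed
    then obtain LP where LP: "\<And>i. i < m \<Longrightarrow> (LP i)-lipschitz_on {t0..T} (P i)" by metis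
    define Lall where "Lall = (\<Sum>i<m. LP i) + (Bw * Lw + Bw * Lw)"
    have lipE: "Lall-lipschitz_on {t0..T} (E i)" if i: "i < m" for i
    proof -
      have a: "(LP i + (Bw * Lw + Bw * Lw))-lipschitz_on {t0..T} (E i)"
        unfolding E_def using lipschitz_on_add[OF LP[OF i] lipQ] by simp
      have b: "LP i \<le> (\<Sum>i<m. LP i)"
        by (rule member_le_sum) (use i LP lipschitz_on_nonneg in auto)
      show ?thesis unfolding Lall_def by (rule lipschitz_on_mono[OF a order_refl]) (use b in simp)
    qed
    have Lall0: "0 \<le> Lall" using lipE[OF m_pos] lipschitz_on_nonneg by blast
    have lipD: "Lall-lipschitz_on {t0..T} D"
      unfolding D_def by (rule lip_min[OF _ _ lipE Lall0]) (use m_pos in auto)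
    have "D T \<le> D t0"
    proof (rule mono_dini[OF T lipD negN])
      fix s e assume s: "s \<in> {t0<..<T}" "s \<notin> N" "(e::real) > 0"
      have s0: "s > t0" using s by auto
      have spos: "s > 0" using s0 t0 by simp
      have "D s \<in> (\<lambda>i. E i s) ` {..<m}" unfolding D_def using m_pos by (intro Min_in) auto
      then obtain i where i: "i < m" "E i s = D s" by auto
      have act: "f i (x s) - f i z \<le> f j (x s) - f j z" if j: "j < m" for j
      proof -
        have "E i s \<le> E j s" using i j unfolding D_def by (metis Min_le finite_imageI finite_lessThan imageI lessThan_iff)
        then have "s\<^sup>2 * (f i (x s) - f i z) \<le> s\<^sup>2 * (f j (x s) - f j z)"
          by (simp add: E_def P_def)
        then show ?thesis using spos by (simp add: mult_le_cancel_left)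
      qed
      define v where "v = x' s"
      define u where "u = x s - z"
      define gg where "gg = g s"
      define Gi where "Gi = grad (f i) (x s)"
      have wd: "(w has_vector_derivative (2 *\<^sub>R x' s + (x' s + s *\<^sub>R x'' s))) (at s)"
        unfolding w_def using xd_at[OF s0] x'd[OF s0 s(2)]
        by (auto intro!: derivative_eq_intros simp: algebra_simps)
      define dE where "dE = 2 * (2 * s) * (f i (x s) - f i z) + 2 * s\<^sup>2 * inner Gi v
           + 2 * (\<alpha> - 3) * (inner u v + inner v u) + 2 * (\<alpha> - 3) * h s
           + (inner (w s) (2 *\<^sub>R x' s + (x' s + s *\<^sub>R x'' s)) + inner (2 *\<^sub>R x' s + (x' s + s *\<^sub>R x'' s)) (w s))"
      have d: "(E i has_real_derivative dE) (at s)"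
        unfolding E_def P_def dE_def u_def v_def Gi_def
        using fx_at[OF i(1) s0] xd_at[OF s0] Jd_at[OF s(1)] wd
        by (auto intro!: derivative_eq_intros vd_inner)
      have dle: "dE \<le> 0"
      proof -
        have ws: "w s = 2 *\<^sub>R u + s *\<^sub>R v" by (simp add: w_def u_def v_def)
        have w': "2 *\<^sub>R x' s + (x' s + s *\<^sub>R x'' s) = (3 - \<alpha>) *\<^sub>R v - s *\<^sub>R gg"
        proof -
          have three: "x' s + 2 *\<^sub>R x' s = 3 *\<^sub>R x' s" using scaleR_left_distrib[of 1 2 "x' s"] by simp
          show ?thesis using spos by (simp add: x''eq v_def gg_def algebra_simps) (use three in simp)
        qed
        have hs: "h s = s * inner v v" by (simp add: h_def v_def power2_norm_eq_inner)
        have "dE = 4 * s * (f i (x s) - f i z - inner u gg) + 2 * s\<^sup>2 * (inner Gi v - inner v gg)"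
          unfolding dE_def ws w' hs
          by (simp add: inner_add_left inner_add_right inner_diff_left inner_diff_right inner_commute
              power2_eq_square algebra_simps)
        moreover have "f i (x s) - f i z \<le> inner u gg"
        proof -
          have "f i (x s) - f i z \<le> inner gg u"
            unfolding gg_def
          proof (rule Cset_lower[OF gC[OF s0 s(2)]])
            fix j assume j: "j < m"
            have "inner (grad (f j) (x s)) (z - x s) \<le> f j z - f j (x s)" using gi[OF j] .
            then have "f j (x s) - f j z \<le> inner (grad (f j) (x s)) u"
              by (simp add: u_def inner_diff_right)
            then show "f i (x s) - f i z \<le> inner (grad (f j) (x s)) u" using act[OF j] by linarith
          qed
          then show ?thesis by (simp add: gg_def inner_commute)
        qed
        moreover have "inner Gi v \<le> inner v gg"
          using gmax[OF s0 s(2) Cset_props(4)[OF m_pos i(1)]] by (simp add: Gi_def v_def gg_def inner_commute)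
        ultimately show ?thesis using spos
          by (simp add: mult_nonneg_nonpos mult_nonneg_nonneg add_nonpos_nonpos)
      qed
      obtain \<delta> where \<delta>: "\<delta> > 0" "\<forall>h. 0 < h \<and> h < \<delta> \<longrightarrow> E i (s + h) \<le> E i s + e * h"
        using dini_of_deriv[OF d dle s(3)] by blast
      have "D (s + h) \<le> E i (s + h)" for h
        unfolding D_def using i(1) by (intro Min_le) auto
      then show "\<exists>\<delta>>0. \<forall>h. 0 < h \<and> h < \<delta> \<longrightarrow> D (s + h) \<le> D s + e * h"
        using \<delta> i(2) by (metis order_trans)
    qed
    have "D T \<in> (\<lambda>i. E i T) ` {..<m}" unfolding D_def using m_pos by (intro Min_in) auto
    then obtain iT where iT: "iT < m" "D T = E iT T" by auto
    have low: "2 * (\<alpha> - 3) * J T \<le> D T"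
    proof -
      have "0 \<le> 2 * T\<^sup>2 * (f iT (x T) - f iT z)" using z(1) iT(1) by simp
      moreover have "0 \<le> 2 * (\<alpha> - 3) * inner (x T - z) (x T - z)" using alpha by simp
      moreover have "0 \<le> inner (w T) (w T)" by simp
      ultimately show ?thesis unfolding iT(2) E_def P_def by linarith
    qed
    have up: "D t0 \<le> 2 * K"
    proof -
      have "D t0 \<le> E 0 t0" unfolding D_def using m_pos by (intro Min_le) auto
      moreover have J0: "J t0 = 0" by (simp add: J_def)
      moreover have w0: "w t0 = 2 *\<^sub>R (x0 - z)" by (simp add: w_def init)
      ultimately have "D t0 \<le> 2 * t0\<^sup>2 * (f 0 x0 - f 0 z) + 2 * (\<alpha> - 1) * inner (x0 - z) (x0 - z)"
        by (simp add: E_def P_def init algebra_simps)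
      moreover have af: "f 0 x0 - f 0 z \<le> Gn * \<rho>"
      proof -
        have "inner (grad (f 0) x0) (z - x0) \<le> f 0 z - f 0 x0" using gi[OF m_pos] .
        then have "f 0 x0 - f 0 z \<le> inner (grad (f 0) x0) (x0 - z)" by (simp add: inner_diff_right)
        also have "\<dots> \<le> Gn * norm (x0 - z)" unfolding Gn_def by (rule norm_cauchy_schwarz)
        also have "\<dots> \<le> Gn * \<rho>"
        proof (rule mult_left_mono)
          show "norm (x0 - z) \<le> \<rho>" unfolding \<rho>_def using z(2)
            by (intro real_le_rsqrt) (simp add: norm_minus_commute)
        qed (simp add: Gn_def)
        finally show ?thesis .
      qed
      moreover have qf: "inner (x0 - z) (x0 - z) \<le> \<rho>\<^sup>2"
        using z(2) Rr0 by (simp add: \<rho>_def power2_norm_eq_inner norm_minus_commute)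
      moreover have "t0\<^sup>2 * (f 0 x0 - f 0 z) \<le> t0\<^sup>2 * Gn * \<rho>"
        using mult_left_mono[OF af, of "t0\<^sup>2"] by (simp add: mult.assoc)
      moreover have "(\<alpha> - 1) * inner (x0 - z) (x0 - z) \<le> (\<alpha> - 1) * \<rho>\<^sup>2"
        using mult_left_mono[OF qf, of "\<alpha> - 1"] alpha by simp
      ultimately show ?thesis unfolding K_def
        using aux_lin[of "D t0" "t0\<^sup>2 * (f 0 x0 - f 0 z)" "(\<alpha> - 1) * inner (x0 - z) (x0 - z)"
              "t0\<^sup>2 * Gn * \<rho>" "(\<alpha> - 1) * \<rho>\<^sup>2"] by (simp add: algebra_simps)
    qed
    have "2 * (\<alpha> - 3) * J T \<le> 2 * K" using low up \<open>D T \<le> D t0\<close> by (meson order_trans)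
    then have "2 * ((\<alpha> - 3) * J T) \<le> 2 * K" by (simp only: mult.assoc)
    then show ?thesis unfolding J_def by linarith
  qed
  have hnn: "0 \<le> h s" if "s \<ge> t0" for s using t0 that by (simp add: h_def)
  have int_eq: "(\<integral>\<^sup>+ s. ennreal (h s) * indicator {t0..T} s \<partial>lborel) = ennreal (integral {t0..T} h)"
    if "T \<ge> t0" for T
  proof -
    have "(h has_integral integral {t0..T} h) {t0..T}"
      using integrable_continuous_interval[OF hcont[of "{t0..T}"]] by auto
    from nn_integral_has_integral_lebesgue[OF _ this] hnn
    have "(\<integral>\<^sup>+ x. ennreal (h x * indicator {t0..T} x) \<partial>lborel) = ennreal (integral {t0..T} h)"
      by (simp add: mult.commute)
    moreover have "(\<lambda>x. ennreal (h x * indicator {t0..T} x)) = (\<lambda>x. ennreal (h x) * indicator {t0..T} x)"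
      by (auto simp: fun_eq_iff indicator_def)
    ultimately show ?thesis by simp
  qed
  have bnd: "integral {t0..T} h \<le> K / (\<alpha> - 3)" if "T \<ge> t0" for T
    using main[OF that] alpha by (simp add: field_simps)
  have sup_eq: "(\<lambda>s. ennreal (h s) * indicator {t0..} s) = (\<lambda>s. SUP n. ennreal (h s) * indicator {t0..t0 + real n} s)"
  proof
    fix s
    show "ennreal (h s) * indicator {t0..} s = (SUP n. ennreal (h s) * indicator {t0..t0 + real n} s)"
    proof (cases "s \<ge> t0")
      case True
      obtain n :: nat where n: "s - t0 \<le> real n" using real_arch_simple by blast
      have "(SUP n. ennreal (h s) * indicator {t0..t0 + real n} s) = ennreal (h s)"
      proof (rule antisym)
        show "(SUP n. ennreal (h s) * indicator {t0..t0 + real n} s) \<le> ennreal (h s)"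
          by (rule SUP_least) (auto simp: indicator_def)
        show "ennreal (h s) \<le> (SUP n. ennreal (h s) * indicator {t0..t0 + real n} s)"
          using n True by (intro SUP_upper2[of n]) (auto simp: indicator_def)
      qed
      then show ?thesis using True by (simp add: indicator_def)
    next
      case False then show ?thesis by (simp add: indicator_def)
    qed
  qed
  have meas: "(\<lambda>s. ennreal (h s) * indicator {t0..t0 + real n} s) \<in> borel_measurable lborel" for n
  proof -
    have "(\<lambda>s. indicator {t0..t0 + real n} s *\<^sub>R h s) \<in> borel_measurable borel"
      by (rule borel_measurable_continuous_on_indicator) (auto intro: hcont)
    then have "(\<lambda>s. ennreal (indicator {t0..t0 + real n} s *\<^sub>R h s)) \<in> borel_measurable borel"
      by measurable
    moreover have "(\<lambda>s. ennreal (indicator {t0..t0 + real n} s *\<^sub>R h s)) = (\<lambda>s. ennreal (h s) * indicator {t0..t0 + real n} s)"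
      by (auto simp: indicator_def fun_eq_iff)
    ultimately show ?thesis by simp
  qed
  have inc: "incseq (\<lambda>n s. ennreal (h s) * indicator {t0..t0 + real n} s)"
    by (auto simp: incseq_def le_fun_def indicator_def)
  have "(\<integral>\<^sup>+ s \<in> {t0..}. ennreal (h s) \<partial>lborel) = (SUP n. \<integral>\<^sup>+ s. ennreal (h s) * indicator {t0..t0 + real n} s \<partial>lborel)"
    unfolding sup_eq by (rule nn_integral_monotone_convergence_SUP[OF inc meas])
  also have "\<dots> \<le> ennreal (K / (\<alpha> - 3))"
    by (rule SUP_least) (simp add: int_eq bnd ennreal_leI)
  also have "\<dots> < \<infinity>" by simp
  finally show ?thesis unfolding h_def .
qed

end
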